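(* Let $X$ be a real Banach space and let $A \subset X$ be a compact set not containing the zero vector. Let $I$ be an index set with $m$ elements and $\{x_i : i \in I\} \subset S_X$. Then there exist $y_i \in \mathbb{R}^+ x_i$ and $r_i > 0$ with $\|y_i\| \ge r_i$ for all $i \in I$ such that $\{B(y_i, r_i)\}_{i \in I}$ covers $A$, if and only if for every selection $\phi$ of the subdifferential mapping $\partial\|\cdot\|$, the family $\{\phi(x_i)\}_{i \in I}$ positively separates points of $A$, i.e. $\sup_{i \in I} \phi(x_i)(x) > 0$ for every $x \in A$.
   Context: $\mathbb{R}^+ x_i = \{ t x_i : t > 0\}$; $B(c,r) = \{ z : \|c - z\| < r\}$. The subdifferential of the norm at $x \ne 0$ is $\partial\|x\| = \{ x^* \in S_{X^*} : x^*(x) = \|x\|\}$. A selection of $\partial\|\cdot\|$ is a map $\phi$ assigning to each non-zero $x$ an element $\phi(x) \in \partial\|x\|$. *)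

theory Defs
  imports "HOL-Analysis.Analysis"
begin

text \<open>Elements of the dual unit sphere are represented as bounded linear
functionals of operator norm 1.  The subdifferential of the norm at x.\<close>
definition subdiff_norm :: "'a::real_normed_vector \<Rightarrow> ('a \<Rightarrow> real) set" where
  "subdiff_norm x = {f. bounded_linear f \<and> onorm f = 1 \<and> f x = norm x}"

definition subdiff_selection :: "('a::real_normed_vector \<Rightarrow> ('a \<Rightarrow> real)) \<Rightarrow> bool" where
  "subdiff_selection \<phi> \<longleftrightarrow> (\<forall>x. x \<noteq> 0 \<longrightarrow> \<phi> x \<in> subdiff_norm x)"

end

theory Submission
  imports Defs
begin


definition pf :: "('a::real_normed_vector \<times> real) set \<Rightarrow> bool" where
  "pf G \<longleftrightarrow> G \<noteq> {} \<and> (\<forall>u r r'. (u,r)\<in>G \<longrightarrow> (u,r')\<in>G \<longrightarrow> r=r')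
     \<and> (\<forall>u r. (u,r)\<in>G \<longrightarrow> r \<le> norm u)
     \<and> (\<forall>u r v s. (u,r)\<in>G \<longrightarrow> (v,s)\<in>G \<longrightarrow> (u+v, r+s)\<in>G)
     \<and> (\<forall>u r a. (u,r)\<in>G \<longrightarrow> (a *\<^sub>R u, a*r) \<in> G)"

lemma pf_fn: "pf G \<Longrightarrow> (u,r)\<in>G \<Longrightarrow> (u,r')\<in>G \<Longrightarrow> r = r'" unfolding pf_def by blast
lemma pf_bd: "pf G \<Longrightarrow> (u,r)\<in>G \<Longrightarrow> r \<le> norm u" unfolding pf_def by blast
lemma pf_add: "pf G \<Longrightarrow> (u,r)\<in>G \<Longrightarrow> (v,s)\<in>G \<Longrightarrow> (u+v,r+s)\<in>G" unfolding pf_def by blast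
lemma pf_sc: "pf G \<Longrightarrow> (u,r)\<in>G \<Longrightarrow> (a *\<^sub>R u, a*r)\<in>G" unfolding pf_def by blast

lemma pf_zero: assumes "pf G" shows "(0,0) \<in> G"
proof -
  from assms obtain u r where "(u,r) \<in> G" unfolding pf_def by auto
  then have "(0 *\<^sub>R u, 0 * r) \<in> G" using assms unfolding pf_def by blast
  then show ?thesis by simp
qed

lemma pf_diff: assumes "pf G" "(u,r)\<in>G" "(v,s)\<in>G" shows "(u - v, r - s) \<in> G"
proof -
  have "((- 1) *\<^sub>R v, (- 1) * s) \<in> G" using assms unfolding pf_def by blast
  then have "(- v, - s) \<in> G" by simp
  then have "(u + - v, r + - s) \<in> G" using assms unfolding pf_def by blast
  then show ?thesis by simp
qed

lemma pf_c_bounds: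
  fixes w :: "'a::real_normed_vector"
  assumes "pf G"
  defines "c \<equiv> Inf {norm (m + w) - r | m r. (m,r) \<in> G}"
  shows "\<forall>m r. (m,r)\<in>G \<longrightarrow> c \<le> norm (m + w) - r"
    and "\<forall>m r. (m,r)\<in>G \<longrightarrow> r - norm (m - w) \<le> c"
proof -
  have key: "r' - norm (m' - w) \<le> norm (m + w) - r" if "(m,r)\<in>G" "(m',r')\<in>G" for m r m' r'
  proof -
    have "(m + m', r + r') \<in> G" using assms(1) that unfolding pf_def by blast
    then have "r + r' \<le> norm (m + m')" using assms(1) unfolding pf_def by blast
    also have "norm (m + m') \<le> norm (m + w) + norm (m' - w)"
      using norm_triangle_ineq[of "m + w" "m' - w"] by simp
    finally show ?thesis by simp
  qed
  have ne: "{norm (m + w) - r | m r. (m,r) \<in> G} \<noteq> {}" using pf_zero[OF assms(1)] by blast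
  have bdd: "bdd_below {norm (m + w) - r | m r. (m,r) \<in> G}"
    unfolding bdd_below_def using key pf_zero[OF assms(1)] by blast
  show "\<forall>m r. (m,r)\<in>G \<longrightarrow> c \<le> norm (m + w) - r"
    unfolding c_def using bdd by (auto intro!: cInf_lower)
  show "\<forall>m r. (m,r)\<in>G \<longrightarrow> r - norm (m - w) \<le> c"
    unfolding c_def using ne key by (auto intro!: cInf_greatest)
qed

lemma pf_ext:
  assumes G: "pf G" and w: "w \<notin> Domain G"
    and c1: "\<forall>m r. (m,r)\<in>G \<longrightarrow> c \<le> norm (m + w) - r"
    and c2: "\<forall>m r. (m,r)\<in>G \<longrightarrow> r - norm (m - w) \<le> c"
  shows "pf {(m + t *\<^sub>R w, r + t * c) | m r t. (m,r)\<in>G}"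
proof -
  let ?G = "{(m + t *\<^sub>R w, r + t * c) | m r t. (m,r)\<in>G}"
  have sc: "(a *\<^sub>R m, a * r) \<in> G" if "(m,r)\<in>G" for a m r using G that unfolding pf_def by blast
  have ad: "(m + m', r + r') \<in> G" if "(m,r)\<in>G" "(m',r')\<in>G" for m r m' r'
    using G that unfolding pf_def by blast
  have fn: "r = r'" if "(m,r)\<in>G" "(m,r')\<in>G" for m r r' using G that unfolding pf_def by blast
  have bd: "r \<le> norm m" if "(m,r)\<in>G" for m r using G that unfolding pf_def by blast
  have "?G \<noteq> {}" using pf_zero[OF G] by blast
  moreover have "\<forall>u r r'. (u,r)\<in>?G \<longrightarrow> (u,r')\<in>?G \<longrightarrow> r=r'"
  proof (intro allI impI)
    fix u r1 r2 assume "(u,r1)\<in>?G" "(u,r2)\<in>?G"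
    then obtain m r t m' r' t' where h: "(m,r)\<in>G" "(m',r')\<in>G" "u = m + t *\<^sub>R w" "r1 = r + t*c"
      "u = m' + t' *\<^sub>R w" "r2 = r' + t'*c" by blast
    have "t = t'"
    proof (rule ccontr)
      assume ne: "t \<noteq> t'"
      have "(m' - m, r' - r) \<in> G" using pf_diff[OF G h(2) h(1)] .
      then have "((1/(t - t')) *\<^sub>R (m' - m), (1/(t-t')) * (r' - r)) \<in> G" by (rule sc)
      moreover have "(1/(t - t')) *\<^sub>R (m' - m) = w"
      proof -
        have "m' - m = (t - t') *\<^sub>R w" using h(3,5) by (simp add: algebra_simps)
        then show ?thesis using ne by simp
      qed
      ultimately show False using w by (metis Domain.DomainI)
    qed
    then have "m = m'" using h by simp
    then have "r = r'" using fn h by blast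
    then show "r1 = r2" using h \<open>t = t'\<close> by simp
  qed
  moreover have "\<forall>u r. (u,r)\<in>?G \<longrightarrow> r \<le> norm u"
  proof (intro allI impI)
    fix u r1 assume "(u,r1)\<in>?G"
    then obtain m r t where h: "(m,r)\<in>G" "u = m + t *\<^sub>R w" "r1 = r + t*c" by blast
    consider "t = 0" | "t > 0" | "t < 0" by linarith
    then show "r1 \<le> norm u"
    proof cases
      case 1 then show ?thesis using h bd by simp
    next
      case 2
      have "((1/t) *\<^sub>R m, (1/t) * r) \<in> G" using sc h(1) .
      then have "c \<le> norm ((1/t) *\<^sub>R m + w) - (1/t) * r" using c1 by blast
      then have "t * c \<le> t * (norm ((1/t) *\<^sub>R m + w) - (1/t) * r)" using 2 by simp
      also have "\<dots> = norm (t *\<^sub>R ((1/t) *\<^sub>R m + w)) - r" using 2 by (simp only: norm_scaleR right_diff_distrib) simp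
      also have "t *\<^sub>R ((1/t) *\<^sub>R m + w) = u" using 2 h by (simp add: algebra_simps)
      finally show ?thesis using h by simp
    next
      case 3
      define s where "s = -t"
      have s: "s > 0" using 3 s_def by simp
      have "((1/s) *\<^sub>R m, (1/s) * r) \<in> G" using sc h(1) .
      then have "(1/s) * r - norm ((1/s) *\<^sub>R m - w) \<le> c" using c2 by blast
      then have e1: "s * ((1/s) * r - norm ((1/s) *\<^sub>R m - w)) \<le> s * c" using s by simp
      have e2: "s * ((1/s) * r - norm ((1/s) *\<^sub>R m - w)) = r - norm (s *\<^sub>R ((1/s) *\<^sub>R m - w))"
        using s by (simp only: norm_scaleR right_diff_distrib) simp
      have e3: "s *\<^sub>R ((1/s) *\<^sub>R m - w) = u" using s h s_def by (simp add: algebra_simps)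
      have "r - norm u \<le> s * c" using e1 unfolding e2 e3 .
      moreover have "s * c = - (t * c)" by (simp add: s_def)
      ultimately show ?thesis using h by linarith
    qed
  qed
  moreover have "\<forall>u r v s. (u,r)\<in>?G \<longrightarrow> (v,s)\<in>?G \<longrightarrow> (u+v, r+s)\<in>?G"
  proof (intro allI impI)
    fix u r1 v r2 assume "(u,r1)\<in>?G" "(v,r2)\<in>?G"
    then obtain m r t m' r' t' where h: "(m,r)\<in>G" "(m',r')\<in>G" "u = m + t *\<^sub>R w" "r1 = r + t*c"
      "v = m' + t' *\<^sub>R w" "r2 = r' + t'*c" by blast
    have "(m + m', r + r') \<in> G" using ad h by blast
    moreover have "u + v = (m + m') + (t + t') *\<^sub>R w" "r1 + r2 = (r + r') + (t + t') * c"
      using h by (simp_all add: algebra_simps)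
    ultimately show "(u+v, r1+r2)\<in>?G" by blast
  qed
  moreover have "\<forall>u r a. (u,r)\<in>?G \<longrightarrow> (a *\<^sub>R u, a*r) \<in> ?G"
  proof (intro allI impI)
    fix u r1 a assume "(u,r1)\<in>?G"
    then obtain m r t where h: "(m,r)\<in>G" "u = m + t *\<^sub>R w" "r1 = r + t*c" by blast
    have "(a *\<^sub>R m, a * r) \<in> G" using sc h by blast
    moreover have "a *\<^sub>R u = a *\<^sub>R m + (a * t) *\<^sub>R w" "a * r1 = a * r + (a*t) * c"
      using h by (simp_all add: algebra_simps)
    ultimately show "(a *\<^sub>R u, a*r1)\<in>?G" by blast
  qed
  ultimately show ?thesis unfolding pf_def by blast
qed

lemma pf_sub_ext: fixes w :: "'a::real_normed_vector" shows "G \<subseteq> {(m + t *\<^sub>R w, r + t * c) | m r t. (m,r)\<in>G}"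
proof
  fix p assume "p \<in> G"
  then obtain m r where "p = (m,r)" "(m,r) \<in> G" by (cases p) auto
  moreover have "p = (m + 0 *\<^sub>R w, r + 0 * c)" using \<open>p = (m,r)\<close> by simp
  ultimately show "p \<in> {(m + t *\<^sub>R w, r + t * c) | m r t. (m,r)\<in>G}"
    by blast
qed

lemma pf_in_ext: "pf G \<Longrightarrow> (w, c) \<in> {(m + t *\<^sub>R w, r + t * c) | m r t. (m,r)\<in>G}"
proof -
  assume "pf G"
  then have "(0,0) \<in> G" by (rule pf_zero)
  moreover have "(w, c) = (0 + 1 *\<^sub>R w, 0 + 1 * c)" by simp
  ultimately show ?thesis by blast
qed


lemma pf_HB:
  fixes G0 :: "('a::real_normed_vector \<times> real) set"
  assumes G0: "pf G0"
  shows "\<exists>f. linear f \<and> (\<forall>u. f u \<le> norm u) \<and> (\<forall>u r. (u,r)\<in>G0 \<longrightarrow> f u = r)"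
proof -
  define AA where "AA = {G. pf G \<and> G0 \<subseteq> G}"
  have "\<exists>M\<in>AA. \<forall>X\<in>AA. M \<subseteq> X \<longrightarrow> X = M"
  proof (rule subset_Zorn_nonempty)
    show "AA \<noteq> {}" using G0 unfolding AA_def by blast
  next
    fix C assume C: "C \<noteq> {}" "subset.chain AA C"
    have sub: "C \<subseteq> AA" and ch: "\<forall>X\<in>C. \<forall>Y\<in>C. X \<subseteq> Y \<or> Y \<subseteq> X"
      using C(2) unfolding subset_chain_def by auto
    have pfC: "pf X" if "X \<in> C" for X using sub that unfolding AA_def by blast
    have two: "\<exists>Z\<in>C. p \<in> Z \<and> q \<in> Z" if "p \<in> \<Union>C" "q \<in> \<Union>C" for p q
    proof -
      from that obtain X Y where "X\<in>C" "Y\<in>C" "p\<in>X" "q\<in>Y" by blast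
      then show ?thesis using ch by blast
    qed
    have "pf (\<Union>C)"
      unfolding pf_def
    proof (intro conjI allI impI)
      obtain X where "X \<in> C" using C(1) by blast
      then have "X \<noteq> {}" using pfC unfolding pf_def by blast
      then show "\<Union>C \<noteq> {}" using \<open>X \<in> C\<close> by blast
    next
      fix u r r' assume "(u,r)\<in>\<Union>C" "(u,r')\<in>\<Union>C"
      then obtain Z where "Z\<in>C" "(u,r)\<in>Z" "(u,r')\<in>Z" using two by blast
      then show "r = r'" using pfC pf_fn by metis
    next
      fix u r assume "(u,r)\<in>\<Union>C"
      then obtain Z where "Z\<in>C" "(u,r)\<in>Z" by blast
      then show "r \<le> norm u" using pfC pf_bd by metis
    next
      fix u r v s assume "(u,r)\<in>\<Union>C" "(v,s)\<in>\<Union>C"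
      then obtain Z where "Z\<in>C" "(u,r)\<in>Z" "(v,s)\<in>Z" using two by blast
      then have "(u+v, r+s) \<in> Z" using pfC pf_add by metis
      then show "(u+v, r+s) \<in> \<Union>C" using \<open>Z \<in> C\<close> by blast
    next
      fix u r a assume "(u,r)\<in>\<Union>C"
      then obtain Z where "Z\<in>C" "(u,r)\<in>Z" by blast
      then have "(a *\<^sub>R u, a*r) \<in> Z" using pfC pf_sc by metis
      then show "(a *\<^sub>R u, a*r) \<in> \<Union>C" using \<open>Z \<in> C\<close> by blast
    qed
    moreover have "G0 \<subseteq> \<Union>C" using C(1) sub unfolding AA_def by blast
    ultimately show "\<Union>C \<in> AA" unfolding AA_def by blast
  qed
  then obtain M where M: "M \<in> AA" and mx0: "\<forall>X\<in>AA. M \<subseteq> X \<longrightarrow> X = M" by blast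
  have M: "pf M" "G0 \<subseteq> M" using M unfolding AA_def by auto
  have mx: "X = M" if "pf X" "G0 \<subseteq> X" "M \<subseteq> X" for X using mx0 that unfolding AA_def by blast
  have dom: "w \<in> Domain M" for w
  proof (rule ccontr)
    assume w: "w \<notin> Domain M"
    define c where "c = Inf {norm (m + w) - r | m r. (m,r) \<in> M}"
    note cb = pf_c_bounds[OF M(1), of w, folded c_def]
    define G' where "G' = {(m + t *\<^sub>R w, r + t * c) | m r t. (m,r)\<in>M}"
    have "pf G'" unfolding G'_def by (rule pf_ext[OF M(1) w cb])
    moreover have "M \<subseteq> G'" unfolding G'_def by (rule pf_sub_ext)
    moreover have "G0 \<subseteq> G'" using M(2) \<open>M \<subseteq> G'\<close> by (rule order_trans)
    ultimately have "G' = M" using mx[of G'] by blast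
    moreover have "(w,c) \<in> G'" unfolding G'_def by (rule pf_in_ext[OF M(1)])
    ultimately show False using w by blast
  qed
  have fn: "r = r'" if "(u,r)\<in>M" "(u,r')\<in>M" for u r r' using M(1) that by (rule pf_fn)
  define f where "f u = (THE r. (u,r) \<in> M)" for u
  have fM: "(u, f u) \<in> M" for u
  proof -
    obtain r where r: "(u,r) \<in> M" using dom[of u] by blast
    have "f u = r" unfolding f_def
    proof (rule the_equality)
      show "(u,r) \<in> M" by (rule r)
      fix r' assume "(u,r') \<in> M" then show "r' = r" using r fn by blast
    qed
    then show ?thesis using r by simp
  qed
  have feq: "f u = r" if "(u,r)\<in>M" for u r using fM[of u] that fn by blast
  have "linear f"
  proof (rule linearI)
    fix u v
    have "(u+v, f u + f v) \<in> M" by (rule pf_add[OF M(1) fM fM])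
    then show "f (u+v) = f u + f v" by (rule feq)
  next
    fix a u
    have "(a *\<^sub>R u, a * f u) \<in> M" by (rule pf_sc[OF M(1) fM])
    then have "f (a *\<^sub>R u) = a * f u" by (rule feq)
    then show "f (a *\<^sub>R u) = a *\<^sub>R f u" by simp
  qed
  moreover have "\<forall>u. f u \<le> norm u" using M(1) fM pf_bd by blast
  moreover have "\<forall>u r. (u,r)\<in>G0 \<longrightarrow> f u = r" using M(2) feq by blast
  ultimately show ?thesis by blast
qed



lemma subdiff_from_linear:
  fixes f :: "'a::real_normed_vector \<Rightarrow> real"
  assumes lf: "linear f" and b: "\<forall>u. f u \<le> norm u" and x: "norm x = 1" and fx: "f x = 1"
  shows "f \<in> subdiff_norm x"
proof -
  have ab: "norm (f u) \<le> norm u" for u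
  proof -
    have "f (- u) \<le> norm (- u)" using b by blast
    then have "- f u \<le> norm u" using linear_neg[OF lf] by simp
    then show ?thesis using b by (simp add: abs_le_iff)
  qed
  have bl: "bounded_linear f"
    by (rule bounded_linear_intro[where K=1]) (use linear_add[OF lf] linear_scale[OF lf] ab in auto)
  have "onorm f \<le> 1" by (rule onorm_bound) (use ab in auto)
  moreover have "1 \<le> onorm f" using onorm[OF bl, of x] x fx by simp
  ultimately show ?thesis unfolding subdiff_norm_def using bl x fx by auto
qed

lemma norming:
  fixes x v :: "'a::real_normed_vector"
  assumes x: "norm x = 1" and hv: "\<forall>s>0. norm (x + s *\<^sub>R v) \<ge> 1"
  shows "\<exists>f\<in>subdiff_norm x. f v \<ge> 0"
proof -
  define G1 where "G1 = {(t *\<^sub>R x, t) | t. True}"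
  have x0: "x \<noteq> 0" using x by auto
  have pf1: "pf G1" unfolding pf_def
  proof (intro conjI allI impI)
    show "G1 \<noteq> {}" unfolding G1_def by blast
  next
    fix u r r' assume "(u,r)\<in>G1" "(u,r')\<in>G1"
    then have "r *\<^sub>R x = r' *\<^sub>R x" unfolding G1_def by auto
    then show "r = r'" using x0 by (simp add: scaleR_cancel_right)
  next
    fix u r assume "(u,r)\<in>G1"
    then show "r \<le> norm u" unfolding G1_def using x by auto
  next
    fix u r w s assume "(u,r)\<in>G1" "(w,s)\<in>G1"
    then have "u + w = (r + s) *\<^sub>R x" unfolding G1_def by (auto simp: scaleR_add_left)
    then show "(u+w, r+s)\<in>G1" unfolding G1_def by blast
  next
    fix u r a assume "(u,r)\<in>G1"
    then have "a *\<^sub>R u = (a * r) *\<^sub>R x" unfolding G1_def by auto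
    then show "(a *\<^sub>R u, a*r)\<in>G1" unfolding G1_def by blast
  qed
  have x1: "(x, 1) \<in> G1" unfolding G1_def by (auto intro: exI[of _ 1])
  obtain G2 where pf2: "pf G2" and sub: "G1 \<subseteq> G2" and v: "\<exists>c\<ge>0. (v,c) \<in> G2"
  proof (cases "v \<in> Domain G1")
    case True
    then obtain t where t: "v = t *\<^sub>R x" unfolding G1_def by auto
    have "t \<ge> 0"
    proof (rule ccontr)
      assume "\<not> t \<ge> 0"
      then have "- 1/t > 0" by (simp add: field_simps)
      then have "norm (x + (- 1/t) *\<^sub>R v) \<ge> 1" using hv by blast
      moreover have "x + (- 1/t) *\<^sub>R v = 0" using t \<open>\<not> t \<ge> 0\<close> by simp
      ultimately show False by simp
    qed
    moreover have "(v,t) \<in> G1" unfolding G1_def t by blast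
    ultimately show ?thesis using that[OF pf1] by blast
  next
    case False
    define c where "c = Inf {norm (m + v) - r | m r. (m,r) \<in> G1}"
    note cb = pf_c_bounds[OF pf1, of v, folded c_def]
    define G2 where "G2 = {(m + t *\<^sub>R v, r + t * c) | m r t. (m,r)\<in>G1}"
    have "pf G2" unfolding G2_def by (rule pf_ext[OF pf1 False cb])
    moreover have "G1 \<subseteq> G2" unfolding G2_def by (rule pf_sub_ext)
    moreover have "(v,c) \<in> G2" unfolding G2_def by (rule pf_in_ext[OF pf1])
    moreover have "c \<ge> 0" unfolding c_def
    proof (rule cInf_greatest)
      show "{norm (m + v) - r | m r. (m,r) \<in> G1} \<noteq> {}" using x1 by blast
    next
      fix y assume "y \<in> {norm (m + v) - r | m r. (m,r) \<in> G1}"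
      then obtain t where y: "y = norm (t *\<^sub>R x + v) - t" unfolding G1_def by auto
      show "0 \<le> y"
      proof (cases "t > 0")
        case True
        then have "norm (x + (1/t) *\<^sub>R v) \<ge> 1" using hv by simp
        moreover have "norm (t *\<^sub>R x + v) = t * norm (x + (1/t) *\<^sub>R v)"
        proof -
          have "t *\<^sub>R x + v = t *\<^sub>R (x + (1/t) *\<^sub>R v)" using True by (simp add: algebra_simps)
          then show ?thesis using True by simp
        qed
        ultimately show ?thesis using y True
          by (metis diff_ge_0_iff_ge mult.right_neutral mult_left_mono less_imp_le)
      next
        case False
        then show ?thesis using y norm_ge_zero[of "t *\<^sub>R x + v"] by linarith
      qed
    qed
    ultimately show ?thesis using that by blast
  qed
  obtain f where lf: "linear f" and b: "\<forall>u. f u \<le> norm u" and fg: "\<forall>u r. (u,r)\<in>G2 \<longrightarrow> f u = r"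
    using pf_HB[OF pf2] by blast
  have "f x = 1" using fg sub x1 by blast
  then have "f \<in> subdiff_norm x" using subdiff_from_linear[OF lf b x] by simp
  moreover have "f v \<ge> 0" using v fg by auto
  ultimately show ?thesis by blast
qed



lemma subdiff_rescale:
  fixes y :: "'a::real_normed_vector"
  assumes f: "f \<in> subdiff_norm ((1/norm y) *\<^sub>R y)" and y: "y \<noteq> 0"
  shows "f \<in> subdiff_norm y"
proof -
  have bl: "bounded_linear f" and o: "onorm f = 1" and fx: "f ((1/norm y) *\<^sub>R y) = norm ((1/norm y) *\<^sub>R y)"
    using f unfolding subdiff_norm_def by auto
  have "f ((1/norm y) *\<^sub>R y) = (1/norm y) * f y" using linear_scale[OF bounded_linear.linear[OF bl]] by simp
  moreover have "norm ((1/norm y) *\<^sub>R y) = 1" using y by simp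
  ultimately have "f y = norm y" using fx y by (simp add: field_simps)
  then show ?thesis unfolding subdiff_norm_def using bl o by auto
qed

lemma subdiff_exists:
  fixes y :: "'a::real_normed_vector"
  assumes "y \<noteq> 0" shows "\<exists>f. f \<in> subdiff_norm y"
proof -
  have "norm ((1/norm y) *\<^sub>R y) = 1" using assms by simp
  moreover have "\<forall>s>0. norm ((1/norm y) *\<^sub>R y + s *\<^sub>R 0) \<ge> 1" using assms by simp
  ultimately obtain f where "f \<in> subdiff_norm ((1/norm y) *\<^sub>R y)" using norming by blast
  then show ?thesis using subdiff_rescale assms by blast
qed

lemma subdiff_le:
  assumes "f \<in> subdiff_norm x" shows "f u \<le> norm u"
proof -
  have bl: "bounded_linear f" and o: "onorm f = 1" using assms unfolding subdiff_norm_def by auto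
  have "norm (f u) \<le> onorm f * norm u" by (rule onorm[OF bl])
  then show ?thesis using o by simp
qed

lemma ball_mono_ray:
  fixes x :: "'a::real_normed_vector"
  assumes "norm x = 1" "a \<le> b"
  shows "ball (a *\<^sub>R x) a \<subseteq> ball (b *\<^sub>R x) b"
proof
  fix z assume "z \<in> ball (a *\<^sub>R x) a"
  then have h: "norm (a *\<^sub>R x - z) < a" by (simp add: dist_norm)
  have "b *\<^sub>R x - z = (a *\<^sub>R x - z) + (b - a) *\<^sub>R x" by (simp add: algebra_simps)
  then have "norm (b *\<^sub>R x - z) \<le> norm (a *\<^sub>R x - z) + norm ((b - a) *\<^sub>R x)"
    by (metis norm_triangle_ineq)
  also have "norm ((b - a) *\<^sub>R x) = b - a" using assms by simp
  finally show "z \<in> ball (b *\<^sub>R x) b" using h by (simp add: dist_norm)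
qed

theorem mainTheorem8:
  fixes A :: "'a::banach set" and I :: "'i set" and x :: "'i \<Rightarrow> 'a" and m :: nat
  assumes "compact A" and "0 \<notin> A"
    and "finite I" and "card I = m"
    and "\<forall>i\<in>I. norm (x i) = 1"
  shows "(\<exists>y r. (\<forall>i\<in>I. (\<exists>t>0. y i = t *\<^sub>R x i) \<and> r i > 0 \<and> norm (y i) \<ge> r i)
                \<and> A \<subseteq> (\<Union>i\<in>I. ball (y i) (r i)))
         \<longleftrightarrow> (\<forall>\<phi>. subdiff_selection \<phi> \<longrightarrow> (\<forall>z\<in>A. \<exists>i\<in>I. \<phi> (x i) z > 0))"
proof
  assume "\<exists>y r. (\<forall>i\<in>I. (\<exists>t>0. y i = t *\<^sub>R x i) \<and> r i > 0 \<and> norm (y i) \<ge> r i)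
                \<and> A \<subseteq> (\<Union>i\<in>I. ball (y i) (r i))"
  then obtain y r where yr: "\<forall>i\<in>I. (\<exists>t>0. y i = t *\<^sub>R x i) \<and> r i > 0 \<and> norm (y i) \<ge> r i"
    and cov: "A \<subseteq> (\<Union>i\<in>I. ball (y i) (r i))" by blast
  show "\<forall>\<phi>. subdiff_selection \<phi> \<longrightarrow> (\<forall>z\<in>A. \<exists>i\<in>I. \<phi> (x i) z > 0)"
  proof (intro allI impI ballI)
    fix \<phi> :: "'a \<Rightarrow> 'a \<Rightarrow> real" and z assume sel: "subdiff_selection \<phi>" and z: "z \<in> A"
    obtain i where i: "i \<in> I" and zb: "z \<in> ball (y i) (r i)" using cov z by blast
    obtain t where t: "t > 0" "y i = t *\<^sub>R x i" and ri: "norm (y i) \<ge> r i" using yr i by blast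
    have xi: "norm (x i) = 1" using assms(5) i by blast
    then have "x i \<noteq> 0" by auto
    then have f: "\<phi> (x i) \<in> subdiff_norm (x i)" using sel unfolding subdiff_selection_def by blast
    then have bl: "bounded_linear (\<phi> (x i))" and fx: "\<phi> (x i) (x i) = 1"
      unfolding subdiff_norm_def using xi by auto
    have ny: "norm (y i) = t" using t xi by simp
    have "\<phi> (x i) (y i) = t" using t fx linear_scale[OF bounded_linear.linear[OF bl]] by simp
    moreover have "\<phi> (x i) (y i - z) = \<phi> (x i) (y i) - \<phi> (x i) z" by (rule linear_diff[OF bounded_linear.linear[OF bl]])
    moreover have "\<phi> (x i) (y i - z) \<le> norm (y i - z)" by (rule subdiff_le[OF f])
    moreover have "norm (y i - z) < r i" using zb by (simp add: dist_norm)
    ultimately show "\<exists>i\<in>I. \<phi> (x i) z > 0" using i ri ny by (intro bexI[of _ i]) auto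
  qed
next
  assume R: "\<forall>\<phi>. subdiff_selection \<phi> \<longrightarrow> (\<forall>z\<in>A. \<exists>i\<in>I. \<phi> (x i) z > 0)"
  have claim: "\<exists>i\<in>I. \<exists>t>0. norm (t *\<^sub>R x i - z) < t" if z: "z \<in> A" for z
  proof (rule ccontr)
    assume "\<not> ?thesis"
    then have nz: "\<forall>i\<in>I. \<forall>t>0. norm (t *\<^sub>R x i - z) \<ge> t" by (meson not_less)
    have ex1: "\<exists>f. f \<in> subdiff_norm (x i) \<and> f z \<le> 0" if i: "i \<in> I" for i
    proof -
      have xi: "norm (x i) = 1" using assms(5) i by blast
      have "\<forall>s>0. norm (x i + s *\<^sub>R (- z)) \<ge> 1"
      proof (intro allI impI)
        fix s :: real assume s: "s > 0"
        have "norm ((1/s) *\<^sub>R x i - z) \<ge> 1/s" using nz i s by simp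
        then have "s * (1/s) \<le> s * norm ((1/s) *\<^sub>R x i - z)" using s by (intro mult_left_mono) auto
        also have "s * norm ((1/s) *\<^sub>R x i - z) = norm (s *\<^sub>R ((1/s) *\<^sub>R x i - z))" using s by simp
        also have "s *\<^sub>R ((1/s) *\<^sub>R x i - z) = x i + s *\<^sub>R (- z)" using s by (simp add: algebra_simps)
        finally show "norm (x i + s *\<^sub>R (- z)) \<ge> 1" using s by simp
      qed
      then obtain f where "f \<in> subdiff_norm (x i)" "f (- z) \<ge> 0" using norming[OF xi] by blast
      moreover have "f (- z) = - f z"
        using \<open>f \<in> subdiff_norm (x i)\<close> unfolding subdiff_norm_def by (auto intro: linear_neg[OF bounded_linear.linear])
      ultimately show ?thesis by auto
    qed
    define \<phi> where "\<phi> y = (if \<exists>i\<in>I. y = x i then SOME f. f \<in> subdiff_norm y \<and> f z \<le> 0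
                            else SOME f. f \<in> subdiff_norm y)" for y
    have sel: "subdiff_selection \<phi>" unfolding subdiff_selection_def
    proof (intro allI impI)
      fix y :: 'a assume y: "y \<noteq> 0"
      show "\<phi> y \<in> subdiff_norm y"
      proof (cases "\<exists>i\<in>I. y = x i")
        case True
        then obtain i where "i \<in> I" "y = x i" by blast
        then have "\<exists>f. f \<in> subdiff_norm y \<and> f z \<le> 0" using ex1 by blast
        then show ?thesis unfolding \<phi>_def using True by (metis (mono_tags, lifting) someI_ex)
      next
        case False
        then show ?thesis unfolding \<phi>_def using subdiff_exists[OF y] by (simp add: someI_ex[where P="\<lambda>f. f \<in> subdiff_norm y"])
      qed
    qed
    obtain i where i: "i \<in> I" and pos: "\<phi> (x i) z > 0" using R sel z by blast
    have "\<exists>f. f \<in> subdiff_norm (x i) \<and> f z \<le> 0" using ex1 i by blast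
    then have "(SOME f. f \<in> subdiff_norm (x i) \<and> f z \<le> 0) z \<le> 0"
      using someI_ex[where P="\<lambda>f. f \<in> subdiff_norm (x i) \<and> f z \<le> 0"] by blast
    moreover have "\<phi> (x i) = (SOME f. f \<in> subdiff_norm (x i) \<and> f z \<le> 0)"
      unfolding \<phi>_def using i by auto
    ultimately have "\<phi> (x i) z \<le> 0" by simp
    then show False using pos by simp
  qed
  define V where "V n = (\<Union>i\<in>I. ball (real (Suc n) *\<^sub>R x i) (real (Suc n)))" for n
  have Vmono: "V n \<subseteq> V k" if "n \<le> k" for n k
  proof -
    have le: "real (Suc n) \<le> real (Suc k)" using that by simp
    have "ball (real (Suc n) *\<^sub>R x i) (real (Suc n)) \<subseteq> ball (real (Suc k) *\<^sub>R x i) (real (Suc k))"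
      if "i \<in> I" for i using ball_mono_ray[OF _ le, of "x i"] assms(5) that by blast
    then show ?thesis unfolding V_def by blast
  qed
  have cov: "A \<subseteq> (\<Union>n\<in>UNIV. V n)"
  proof
    fix z assume z: "z \<in> A"
    obtain i t where i: "i \<in> I" and t: "t > 0" "norm (t *\<^sub>R x i - z) < t" using claim[OF z] by blast
    obtain n where "t \<le> real n" using real_arch_simple by blast
    then have n: "t \<le> real (Suc n)" by simp
    have "z \<in> ball (t *\<^sub>R x i) t" using t by (simp add: dist_norm)
    then have "z \<in> ball (real (Suc n) *\<^sub>R x i) (real (Suc n))"
      using ball_mono_ray[of "x i" t "real (Suc n)"] assms(5) i n by blast
    then show "z \<in> (\<Union>n\<in>UNIV. V n)" unfolding V_def using i by blast
  qed
  have opn: "open (V n)" for n unfolding V_def by (intro open_UN ballI open_ball)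
  obtain C where C: "finite C" "A \<subseteq> (\<Union>n\<in>C. V n)"
  proof (rule compactE_image[OF assms(1), of UNIV V])
    show "open (V T)" for T by (rule opn)
    show "A \<subseteq> (\<Union>n\<in>UNIV. V n)" by (rule cov)
    fix C' assume "C' \<subseteq> UNIV" "finite C'" "A \<subseteq> (\<Union>n\<in>C'. V n)"
    then show thesis using that by blast
  qed
  define N where "N = Max (insert 0 C)"
  have "A \<subseteq> V N"
  proof
    fix z assume "z \<in> A"
    then obtain n where "n \<in> C" "z \<in> V n" using C by blast
    moreover have "n \<le> N" unfolding N_def using C(1) \<open>n \<in> C\<close> by simp
    ultimately show "z \<in> V N" using Vmono by blast
  qed
  define y where "y i = real (Suc N) *\<^sub>R x i" for i
  define r where "r i = real (Suc N)" for i :: 'i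
  have "\<forall>i\<in>I. (\<exists>t>0. y i = t *\<^sub>R x i) \<and> r i > 0 \<and> norm (y i) \<ge> r i"
  proof
    fix i assume "i \<in> I"
    then have "norm (x i) = 1" using assms(5) by blast
    then show "(\<exists>t>0. y i = t *\<^sub>R x i) \<and> r i > 0 \<and> norm (y i) \<ge> r i"
      unfolding y_def r_def by (intro conjI exI[of _ "real (Suc N)"]) auto
  qed
  moreover have "A \<subseteq> (\<Union>i\<in>I. ball (y i) (r i))"
    using \<open>A \<subseteq> V N\<close> unfolding V_def y_def r_def by simp
  ultimately show "\<exists>y r. (\<forall>i\<in>I. (\<exists>t>0. y i = t *\<^sub>R x i) \<and> r i > 0 \<and> norm (y i) \<ge> r i) \<and> A \<subseteq> (\<Union>i\<in>I. ball (y i) (r i))"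
    by blast
qed


end
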